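(* Let $R$ be a topological ring and $M$ a locally compact left topological $R$-module which is of Lie type. Then $M$ has the no small submodules property.
   Context: All topological groups are Hausdorff; rings are unital. $R_R$ denotes $R$ as a right topological module over itself; its Pontryagin dual $\widehat{R_R}$ (continuous homomorphisms $R\to\mathbb{S}^1$, compact-open topology) is a left $R$-module via $(r\chi)(x)=\chi(xr)$. Two topological $R$-modules $M,M'$ are locally isomorphic if there are open neighbourhoods $U\subset M$, $V\subset M'$ of $0$ and a homeomorphism $f:U\to V$ such that $f(x+y)=f(x)+f(y)$ whenever $x,y,x+y\in U$, $f(-x)=-f(x)$ whenever $x,-x\in U$, and $f(rx)=rf(x)$ whenever $x\in U$, $r\in R$, $rx\in U$. $M$ is of Lie type if it is locally isomorphic to $\widehat{R_R}^n$ for some $n\ge 0$. $M$ has the no small submodules property if some neighbourhood of $0$ contains no nonzero submodule. *)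

theory Defs
  imports "HOL-Analysis.Analysis"
begin

text \<open>A topological ring is modelled by a type of class
  ring_1 + t2_space + topological_group_add + topological_semigroup_mult
  (unital ring, Hausdorff, continuous addition, negation and multiplication).\<close>

definition left_module :: "('r::ring_1 \<Rightarrow> 'm::ab_group_add \<Rightarrow> 'm) \<Rightarrow> bool" where
  "left_module smul \<longleftrightarrow>
     (\<forall>r x y. smul r (x + y) = smul r x + smul r y) \<and>
     (\<forall>r s x. smul (r + s) x = smul r x + smul s x) \<and>
     (\<forall>r s x. smul (r * s) x = smul r (smul s x)) \<and>
     (\<forall>x. smul 1 x = x)"

definition topological_left_module ::
  "('r::{ring_1,topological_space} \<Rightarrow> 'm::{ab_group_add,topological_space} \<Rightarrow> 'm) \<Rightarrow> bool" where
  "topological_left_module smul \<longleftrightarrow>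
     left_module smul \<and> continuous_on UNIV (\<lambda>p::'r \<times> 'm. smul (fst p) (snd p))"

definition submodule :: "('r \<Rightarrow> 'm::ab_group_add \<Rightarrow> 'm) \<Rightarrow> 'm set \<Rightarrow> bool" where
  "submodule smul N \<longleftrightarrow> 0 \<in> N \<and> (\<forall>x\<in>N. \<forall>y\<in>N. x + y \<in> N) \<and> (\<forall>x\<in>N. - x \<in> N)
     \<and> (\<forall>r. \<forall>x\<in>N. smul r x \<in> N)"

definition no_small_submodules :: "('r \<Rightarrow> 'm::{ab_group_add,topological_space} \<Rightarrow> 'm) \<Rightarrow> bool" where
  "no_small_submodules smul \<longleftrightarrow>
     (\<exists>W. (\<exists>T. open T \<and> 0 \<in> T \<and> T \<subseteq> W) \<and>
          (\<forall>N. submodule smul N \<and> N \<subseteq> W \<longrightarrow> N = {0}))"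

text \<open>Pontryagin dual of R_R: continuous homomorphisms (R,+) \<rightarrow> S^1, where S^1 is the
  unit circle in the complex plane (written multiplicatively), with the compact-open topology.\<close>
definition characters :: "('r::{ring_1,topological_space} \<Rightarrow> complex) set" where
  "characters = {\<gamma>. continuous_on UNIV \<gamma> \<and> (\<forall>x. cmod (\<gamma> x) = 1)
                     \<and> (\<forall>x y. \<gamma> (x + y) = \<gamma> x * \<gamma> y)}"

definition compact_open_dual :: "('r::{ring_1,topological_space} \<Rightarrow> complex) topology" where
  "compact_open_dual = topology_generated_by
     {{\<gamma> \<in> characters. \<gamma> ` K \<subseteq> W} | K W. compact K \<and> open W}"

definition dual_pow :: "nat \<Rightarrow> (nat \<Rightarrow> 'r::{ring_1,topological_space} \<Rightarrow> complex) topology" where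
  "dual_pow n = product_topology (\<lambda>_. compact_open_dual) {..<n}"

definition dual_zero :: "nat \<Rightarrow> nat \<Rightarrow> 'r::ring_1 \<Rightarrow> complex" where
  "dual_zero n = (\<lambda>i\<in>{..<n}. \<lambda>x. 1)"

definition dual_add :: "nat \<Rightarrow> (nat \<Rightarrow> 'r::ring_1 \<Rightarrow> complex) \<Rightarrow> (nat \<Rightarrow> 'r \<Rightarrow> complex)
    \<Rightarrow> nat \<Rightarrow> 'r \<Rightarrow> complex" where
  "dual_add n \<phi> \<psi> = (\<lambda>i\<in>{..<n}. \<lambda>x. \<phi> i x * \<psi> i x)"

definition dual_neg :: "nat \<Rightarrow> (nat \<Rightarrow> 'r::ring_1 \<Rightarrow> complex) \<Rightarrow> nat \<Rightarrow> 'r \<Rightarrow> complex" where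
  "dual_neg n \<phi> = (\<lambda>i\<in>{..<n}. \<lambda>x. inverse (\<phi> i x))"

definition dual_smul :: "nat \<Rightarrow> 'r::ring_1 \<Rightarrow> (nat \<Rightarrow> 'r \<Rightarrow> complex) \<Rightarrow> nat \<Rightarrow> 'r \<Rightarrow> complex" where
  "dual_smul n r \<phi> = (\<lambda>i\<in>{..<n}. \<lambda>x. \<phi> i (x * r))"

definition locally_isomorphic_dual_pow ::
  "('r::{ring_1,topological_space} \<Rightarrow> 'm::{ab_group_add,topological_space} \<Rightarrow> 'm) \<Rightarrow> nat \<Rightarrow> bool" where
  "locally_isomorphic_dual_pow smul n \<longleftrightarrow>
     (\<exists>U V f. open U \<and> 0 \<in> U \<and> openin (dual_pow n) V \<and> dual_zero n \<in> V \<and>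
        homeomorphic_map (subtopology euclidean U) (subtopology (dual_pow n) V) f \<and>
        (\<forall>x y. x \<in> U \<and> y \<in> U \<and> x + y \<in> U \<longrightarrow> f (x + y) = dual_add n (f x) (f y)) \<and>
        (\<forall>x. x \<in> U \<and> - x \<in> U \<longrightarrow> f (- x) = dual_neg n (f x)) \<and>
        (\<forall>r x. x \<in> U \<and> smul r x \<in> U \<longrightarrow> f (smul r x) = dual_smul n r (f x)))"

definition lie_type ::
  "('r::{ring_1,topological_space} \<Rightarrow> 'm::{ab_group_add,topological_space} \<Rightarrow> 'm) \<Rightarrow> bool" where
  "lie_type smul \<longleftrightarrow> (\<exists>n. locally_isomorphic_dual_pow smul n)"

end

theory Submission
  imports Defs
begin

lemma sq_step:
  fixes z :: complex
  assumes "cmod z = 1" "Re z > 1/2"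
  shows "1 - Re (z * z) \<ge> 3 * (1 - Re z)"
proof -
  have "(Re z)^2 + (Im z)^2 = 1" using assms(1) cmod_power2[of z] by simp
  hence "Re (z*z) = 2 * (Re z)^2 - 1" by (simp add: power2_eq_square)
  hence "1 - Re (z*z) = 2 * (1 - Re z) * (1 + Re z)" by (simp add: algebra_simps power2_eq_square)
  moreover have "1 - Re z \<ge> 0" using complex_Re_le_cmod[of z] assms(1) by simp
  moreover have "2 * (1 - Re z) * (3/2) \<le> 2 * (1 - Re z) * (1 + Re z)"
    using calculation(2) assms(2) by (intro mult_left_mono) auto
  ultimately show ?thesis by simp
qed

lemma char_trivial:
  assumes g: "\<gamma> \<in> characters" and pos: "\<And>r. Re (\<gamma> r) > 1/2"
  shows "\<gamma> r = 1"
proof -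
  have unit: "\<And>x. cmod (\<gamma> x) = 1" and hom: "\<And>x y. \<gamma> (x + y) = \<gamma> x * \<gamma> y"
    using g unfolding characters_def by auto
  have le1: "\<And>x. Re (\<gamma> x) \<le> 1" using unit complex_Re_le_cmod by metis
  have ind: "\<forall>r. 3 ^ k * (1 - Re (\<gamma> r)) \<le> 1/2" for k :: nat
  proof (induction k)
    case 0
    show ?case
    proof
      fix r
      show "3 ^ 0 * (1 - Re (\<gamma> r)) \<le> 1/2" using pos[of r] by simp
    qed
  next
    case (Suc k)
    show ?case
    proof
      fix r
      have "3 * (1 - Re (\<gamma> r)) \<le> 1 - Re (\<gamma> (r + r))"
        using sq_step[OF unit pos] hom by simp
      hence "3 ^ k * (3 * (1 - Re (\<gamma> r))) \<le> 3 ^ k * (1 - Re (\<gamma> (r + r)))"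
        by (intro mult_left_mono) auto
      also have "\<dots> \<le> 1/2" using Suc by blast
      finally show "3 ^ Suc k * (1 - Re (\<gamma> r)) \<le> 1/2" by (simp add: algebra_simps)
    qed
  qed
  have "1 - Re (\<gamma> r) = 0"
  proof (rule ccontr)
    assume ne: "1 - Re (\<gamma> r) \<noteq> 0"
    hence p: "1 - Re (\<gamma> r) > 0" using le1[of r] by simp
    obtain k :: nat where "1 / (1 - Re (\<gamma> r)) < 3 ^ k"
      using real_arch_pow[of 3 "1 / (1 - Re (\<gamma> r))"] by auto
    hence "1 < 3 ^ k * (1 - Re (\<gamma> r))" using p by (simp add: field_simps)
    moreover have "3 ^ k * (1 - Re (\<gamma> r)) \<le> 1/2" using ind by blast
    ultimately show False by linarith
  qed
  hence re: "Re (\<gamma> r) = 1" by simp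
  have "(Re (\<gamma> r))^2 + (Im (\<gamma> r))^2 = 1" using unit[of r] cmod_power2[of "\<gamma> r"] by simp
  hence "Im (\<gamma> r) = 0" using re by simp
  thus ?thesis using re complex_eqI by auto
qed


lemma topspace_dual: "topspace (compact_open_dual :: ('r::{ring_1,topological_space} \<Rightarrow> complex) topology) = characters"
proof -
  let ?S = "{{\<gamma> \<in> (characters :: ('r \<Rightarrow> complex) set). \<gamma> ` K \<subseteq> W} | K W. compact K \<and> open W}"
  have a: "\<Union>?S \<subseteq> characters"
  proof
    fix x assume "x \<in> \<Union>?S"
    then obtain A where "A \<in> ?S" "x \<in> A" by (rule UnionE)
    then obtain K W where "A = {\<gamma> \<in> (characters :: ('r \<Rightarrow> complex) set). \<gamma> ` K \<subseteq> W}" by auto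
    then show "x \<in> characters" using \<open>x \<in> A\<close> by simp
  qed
  have m1: "{\<gamma> \<in> (characters :: ('r \<Rightarrow> complex) set). \<gamma> ` {} \<subseteq> UNIV} \<in> ?S"
    unfolding mem_Collect_eq by (rule exI[of _ "{}"], rule exI[of _ UNIV]) simp
  have m2: "{\<gamma> \<in> (characters :: ('r \<Rightarrow> complex) set). \<gamma> ` {} \<subseteq> UNIV} = characters" by simp
  have m3: "characters \<in> ?S" using m1 unfolding m2 .
  have b: "characters \<subseteq> \<Union>?S" using Union_upper[OF m3] .
  have "\<Union>?S = characters" using a b by (rule subset_antisym)
  then show ?thesis unfolding compact_open_dual_def topology_generated_by_topspace .
qed


lemma eval_cont: "continuous_map (compact_open_dual :: ('r::{ring_1,topological_space} \<Rightarrow> complex) topology) euclidean (\<lambda>\<gamma>. \<gamma> a)"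
  unfolding continuous_map_def
proof (intro conjI allI impI)
  fix W :: "complex set" assume "openin euclidean W"
  hence oW: "open W" by simp
  have eq: "{\<gamma> \<in> topspace (compact_open_dual :: ('r \<Rightarrow> complex) topology). \<gamma> a \<in> W}
      = {\<gamma> \<in> characters. \<gamma> ` {a} \<subseteq> W}" unfolding topspace_dual by auto
  have mem: "{\<gamma> \<in> (characters :: ('r \<Rightarrow> complex) set). \<gamma> ` {a} \<subseteq> W}
     \<in> {{\<gamma> \<in> (characters :: ('r \<Rightarrow> complex) set). \<gamma> ` K \<subseteq> W} | K W. compact K \<and> open W}"
    unfolding mem_Collect_eq by (rule exI[of _ "{a}"], rule exI[of _ W]) (simp add: oW)
  show "openin compact_open_dual {\<gamma> \<in> topspace (compact_open_dual :: ('r \<Rightarrow> complex) topology). \<gamma> a \<in> W}"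
    unfolding eq unfolding compact_open_dual_def by (rule topology_generated_by_Basis[OF mem])
next
  show "(\<lambda>\<gamma>. \<gamma> a) \<in> topspace compact_open_dual \<rightarrow> topspace euclidean" by simp
qed


theorem mainTheorem18:
  fixes smul :: "'r::{ring_1,t2_space,topological_group_add,topological_semigroup_mult}
                   \<Rightarrow> 'm::{ab_group_add,t2_space,topological_group_add} \<Rightarrow> 'm"
  assumes "topological_left_module smul"
    and "locally_compact_space (euclidean :: 'm topology)"
    and "lie_type smul"
  shows "no_small_submodules smul"
proof -
  obtain n where "locally_isomorphic_dual_pow smul n" using assms(3) lie_type_def by blast
  then obtain U V f where U: "open U" "0 \<in> U" and V: "openin (dual_pow n) V"
    and hm: "homeomorphic_map (subtopology euclidean U) (subtopology (dual_pow n) V) f"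
    and fadd: "\<And>x y. x \<in> U \<Longrightarrow> y \<in> U \<Longrightarrow> x + y \<in> U \<Longrightarrow> f (x + y) = dual_add n (f x) (f y)"
    and fsm: "\<And>r x. x \<in> U \<Longrightarrow> smul r x \<in> U \<Longrightarrow> f (smul r x) = dual_smul n r (f x)"
    unfolding locally_isomorphic_dual_pow_def by metis
  have topd: "topspace (dual_pow n) = PiE {..<n} (\<lambda>_. (characters :: ('r \<Rightarrow> complex) set))"
    unfolding dual_pow_def by (simp add: topspace_dual)
  have Vsub: "V \<subseteq> topspace (dual_pow n)" using openin_subset[OF V] .
  have fimg: "f ` U = V" using homeomorphic_imp_surjective_map[OF hm] Vsub by (simp add: Int_absorb1)
  have finj: "inj_on f U" using homeomorphic_imp_injective_map[OF hm] by simp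
  have fin: "\<And>x. x \<in> U \<Longrightarrow> f x \<in> PiE {..<n} (\<lambda>_. characters)" using fimg Vsub topd by blast
  have cont0: "continuous_map (subtopology euclidean U) (subtopology (dual_pow n) V) f"
    using homeomorphic_imp_continuous_map[OF hm] .
  have cont: "continuous_map (subtopology euclidean U) (dual_pow n) f"
    using continuous_map_from_subtopology_mono cont0 continuous_map_into_fulltopology by blast
  have f0: "f 0 = dual_zero n"
  proof
    fix i
    show "f 0 i = dual_zero n i"
    proof (cases "i < n")
      case True
      have ch: "f 0 i \<in> characters" using fin[OF U(2)] True by auto
      have "f 0 = dual_add n (f 0) (f 0)" using fadd[OF U(2) U(2)] U(2) by simp
      hence e: "\<And>x. f 0 i x = f 0 i x * f 0 i x" using True unfolding dual_add_def
        by (metis (no_types, lifting) lessThan_iff restrict_apply')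
      have "f 0 i x = 1" for x
      proof -
        have "cmod (f 0 i x) = 1" using ch unfolding characters_def by blast
        hence "f 0 i x \<noteq> 0" by auto
        thus ?thesis using e[of x] by (metis mult_cancel_right1)
      qed
      thus ?thesis using True unfolding dual_zero_def by auto
    next
      case False
      have "f 0 i = undefined" by (rule PiE_arb[OF fin[OF U(2)]]) (use False in simp)
      moreover have "dual_zero n i = (undefined :: 'r \<Rightarrow> complex)" using False by (simp add: dual_zero_def)
      ultimately show ?thesis by simp
    qed
  qed
  define T where "T = U \<inter> (\<Inter>i\<in>{..<n}. {x \<in> U. f x i 1 \<in> {z. Re z > 1/2}})"
  have opi: "open {x \<in> U. f x i 1 \<in> {z. Re z > 1/2}}" if "i \<in> {..<n}" for i
  proof -
    have pr: "continuous_map (dual_pow n :: (nat \<Rightarrow> 'r \<Rightarrow> complex) topology) compact_open_dual (\<lambda>\<phi>. \<phi> i)"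
      unfolding dual_pow_def by (rule continuous_map_product_projection) (rule that)
    have "continuous_map (subtopology euclidean U) euclidean ((\<lambda>\<gamma>. \<gamma> 1) \<circ> ((\<lambda>\<phi>. \<phi> i) \<circ> f))"
      using continuous_map_compose[OF continuous_map_compose[OF cont pr] eval_cont[of 1]] .
    hence "continuous_map (subtopology euclidean U) euclidean (\<lambda>x. f x i 1)"
      by (simp add: o_def)
    hence "openin (subtopology euclidean U) {x \<in> topspace (subtopology euclidean U). f x i 1 \<in> {z. Re z > 1/2}}"
      by (rule openin_continuous_map_preimage) (use open_halfspace_Re_gt[of "1/2"] in simp)
    thus ?thesis using U(1) openin_open_trans by force
  qed
  have "open T" unfolding T_def
    by (rule open_Int[OF U(1) open_INT]) (use opi in auto)
  have "0 \<in> T" unfolding T_def using U(2) f0 by (simp add: dual_zero_def)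
  have main: "N = {0}" if N: "submodule smul N" "N \<subseteq> T" for N
  proof -
    have "x = 0" if x: "x \<in> N" for x
    proof -
      have xU: "x \<in> U" using x N T_def by auto
      have fx1: "f x i = (\<lambda>_. 1)" if i: "i < n" for i
      proof
        fix a
        have ch: "f x i \<in> characters" using fin[OF xU] i by auto
        have "Re (f x i r) > 1/2" for r
        proof -
          have sN: "smul r x \<in> N" using N(1) x unfolding submodule_def by blast
          hence sT: "smul r x \<in> T" using N(2) by auto
          hence "smul r x \<in> U" unfolding T_def by auto
          hence "f (smul r x) = dual_smul n r (f x)" using fsm xU by blast
          hence "f (smul r x) i 1 = f x i r" using i unfolding dual_smul_def by simp
          moreover have "Re (f (smul r x) i 1) > 1/2" using sT i unfolding T_def by auto
          ultimately show ?thesis by simp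
        qed
        then show "f x i a = 1" using char_trivial[OF ch] by blast
      qed
      have "f x = dual_zero n"
      proof
        fix i
        show "f x i = dual_zero n i"
        proof (cases "i < n")
          case True
          then show ?thesis using fx1 by (simp add: dual_zero_def)
        next
          case False
          have "f x i = undefined" by (rule PiE_arb[OF fin[OF xU]]) (use False in simp)
          moreover have "dual_zero n i = (undefined :: 'r \<Rightarrow> complex)" using False by (simp add: dual_zero_def)
          ultimately show ?thesis by simp
        qed
      qed
      hence "f x = f 0" using f0 by simp
      thus ?thesis using finj xU U(2) by (meson inj_onD)
    qed
    moreover have "0 \<in> N" using N(1) unfolding submodule_def by blast
    ultimately show ?thesis by blast
  qed
  show ?thesis unfolding no_small_submodules_def
    using \<open>open T\<close> \<open>0 \<in> T\<close> main by blast
qed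

end
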